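(* Let $G = (V, E, b, c)$ be a weighted hypergraph in which every vertex belongs to some edge, let $\mathtt{OPT}$ be a minimum-cost edge cover of $G$, and run procedure COVER on the stream of edges of $G$. Let $0 < \epsilon < 1$ and let $r^*$ be the largest integer such that $b(I(\leq r^* )) \leq \epsilon \cdot b(V)$, where $I(\leq r) = \{ v \in V \mid \mathrm{eff}_\infty(v) \leq r \}$. Then the edge collection $S(> r^* ) = \{ e \in E \mid \exists v \in V \text{ with } \mathrm{eff}_\infty(v) > r^* \text{ and } \mathrm{eid}_\infty(v) = \mathrm{id}(e) \}$ satisfies \[ c(S(> r^* )) < 8 \cdot c(\mathtt{OPT}) / \epsilon. \]
   Context: A weighted hypergraph $G = (V, E, b, c)$ has vertex set $V$, a multiset $E$ of non-empty edges $e \subseteq V$, benefits $b : V \to \mathbb{Q}_{>0}$ and costs $c : E \to \mathbb{Q}_{>0}$; $b(U) = \sum_{v \in U} b(v)$, $c(F) = \sum_{e \in F} c(e)$. An edge cover is a set $F \subseteq E$ whose union is $V$. Edges arrive in a stream $e_0, e_1, \dots$, and $\mathrm{id}(e)$ is a unique identifier of edge $e$. Procedure COVER maintains for each $v \in V$ a variable $\mathrm{eid}(v)$ (initially NULL) and an integer variable $\mathrm{eff}(v)$ (initially $-\infty$); $\mathrm{eff}_t(v)$ denotes its value just before $e_t$ is processed, and $\mathrm{eff}_\infty(v)$, $\mathrm{eid}_\infty(v)$ the values after the whole stream has been processed. For $T \subseteq e_t$ the level is $\mathrm{lev}_t(T) = \lceil \lg (b(T)/c(e_t)) \rceil$ ($\lg$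 = base-2 logarithm), and $T$ is effective at time $t$ if $\mathrm{lev}_t(T) > \mathrm{eff}_t(v)$ for every $v \in T$ (the empty set is vacuously effective). When $e_t$ arrives, COVER computes an effective subset $T \subseteq e_t$ of largest benefit $b(T)$ (any such subset) and, for every $v \in T$, sets $\mathrm{eid}(v) \leftarrow \mathrm{id}(e_t)$ and $\mathrm{eff}(v) \leftarrow \mathrm{lev}_t(T)$. *)

theory Defs
  imports Complex_Main
begin

text \<open>A stream is a finite list of edges; the t-th element is (e_t, c(e_t)).
  The identifier id(e_t) is the stream position t.  Benefits b : V -> rat.
  eid(v) :: nat option (None = NULL), eff(v) :: int option (None = -infinity).\<close>

type_synonym 'v stream = "('v set \<times> rat) list"
type_synonym 'v cstate = "('v \<Rightarrow> nat option) \<times> ('v \<Rightarrow> int option)"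

definition weighted_hypergraph :: "'v set \<Rightarrow> ('v \<Rightarrow> rat) \<Rightarrow> 'v stream \<Rightarrow> bool" where
  "weighted_hypergraph V b es \<longleftrightarrow> finite V \<and> (\<forall>v\<in>V. b v > 0) \<and>
     (\<forall>i<length es. fst (es!i) \<noteq> {} \<and> fst (es!i) \<subseteq> V \<and> snd (es!i) > 0)"

definition edge_cost :: "'v stream \<Rightarrow> nat set \<Rightarrow> rat" where
  "edge_cost es F = (\<Sum>i\<in>F. snd (es!i))"

definition edge_cover :: "'v set \<Rightarrow> 'v stream \<Rightarrow> nat set \<Rightarrow> bool" where
  "edge_cover V es F \<longleftrightarrow> F \<subseteq> {..<length es} \<and> (\<Union>i\<in>F. fst (es!i)) = V"

definition min_edge_cover :: "'v set \<Rightarrow> 'v stream \<Rightarrow> nat set \<Rightarrow> bool" where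
  "min_edge_cover V es F \<longleftrightarrow> edge_cover V es F \<and>
     (\<forall>F'. edge_cover V es F' \<longrightarrow> edge_cost es F \<le> edge_cost es F')"

definition lev :: "('v \<Rightarrow> rat) \<Rightarrow> 'v stream \<Rightarrow> nat \<Rightarrow> 'v set \<Rightarrow> int" where
  "lev b es t T = \<lceil>log 2 (real_of_rat (sum b T / snd (es!t)))\<rceil>"

text \<open>State before e_t is processed, given the chosen subsets Ts.\<close>
fun cover_state :: "('v \<Rightarrow> rat) \<Rightarrow> 'v stream \<Rightarrow> 'v set list \<Rightarrow> nat \<Rightarrow> 'v cstate" where
  "cover_state b es Ts 0 = ((\<lambda>_. None), (\<lambda>_. None))"
| "cover_state b es Ts (Suc t) =
     (let (eid, eff) = cover_state b es Ts t; T = Ts!t in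
       ((\<lambda>v. if v \<in> T then Some t else eid v),
        (\<lambda>v. if v \<in> T then Some (lev b es t T) else eff v)))"

definition effective :: "('v \<Rightarrow> rat) \<Rightarrow> 'v stream \<Rightarrow> 'v set list \<Rightarrow> nat \<Rightarrow> 'v set \<Rightarrow> bool" where
  "effective b es Ts t T \<longleftrightarrow>
     (\<forall>v\<in>T. case snd (cover_state b es Ts t) v of None \<Rightarrow> True | Some k \<Rightarrow> lev b es t T > k)"

definition cover_run :: "('v \<Rightarrow> rat) \<Rightarrow> 'v stream \<Rightarrow> 'v set list \<Rightarrow> bool" where
  "cover_run b es Ts \<longleftrightarrow> length Ts = length es \<and>
     (\<forall>t<length es. Ts!t \<subseteq> fst (es!t) \<and> effective b es Ts t (Ts!t) \<and>
        (\<forall>T'. T' \<subseteq> fst (es!t) \<longrightarrow> effective b es Ts t T' \<longrightarrow> sum b T' \<le> sum b (Ts!t)))"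

definition final_eid where "final_eid b es Ts = fst (cover_state b es Ts (length es))"
definition final_eff where "final_eff b es Ts = snd (cover_state b es Ts (length es))"

definition I_le :: "'v set \<Rightarrow> ('v \<Rightarrow> rat) \<Rightarrow> 'v stream \<Rightarrow> 'v set list \<Rightarrow> int \<Rightarrow> 'v set" where
  "I_le V b es Ts r = {v\<in>V. case final_eff b es Ts v of None \<Rightarrow> True | Some k \<Rightarrow> k \<le> r}"

definition S_gt :: "'v set \<Rightarrow> ('v \<Rightarrow> rat) \<Rightarrow> 'v stream \<Rightarrow> 'v set list \<Rightarrow> int \<Rightarrow> nat set" where
  "S_gt V b es Ts r = {i. i < length es \<and> (\<exists>v\<in>V.
      (case final_eff b es Ts v of None \<Rightarrow> False | Some k \<Rightarrow> k > r) \<and> final_eid b es Ts v = Some i)}"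

end

theory Submission
  imports Defs
begin

lemma sum_le_UN:
  fixes f :: "'a \<Rightarrow> real"
  assumes "finite F" "\<forall>t\<in>F. finite (A t)" "\<forall>x\<in>\<Union>(A`F). 0 \<le> f x" "X \<subseteq> \<Union>(A`F)"
  shows "sum f X \<le> (\<Sum>t\<in>F. sum f (A t))"
proof -
  have "sum f X \<le> sum f (\<Union>(A`F))"
    using assms by (intro sum_mono2) auto
  also have "\<dots> \<le> (\<Sum>t\<in>F. sum f (A t))"
    using assms(1,2,3)
  proof (induction F rule: finite_induct)
    case empty then show ?case by simp
  next
    case (insert a F)
    have "sum f (\<Union>(A`insert a F)) = sum f (A a \<union> \<Union>(A`F))" by simp
    also have "\<dots> = sum f (A a) + sum f (\<Union>(A`F)) - sum f (A a \<inter> \<Union>(A`F))"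
      using insert by (subst sum_Un) auto
    also have "\<dots> \<le> sum f (A a) + sum f (\<Union>(A`F))"
      using insert by (auto intro!: sum_nonneg)
    also have "\<dots> \<le> sum f (A a) + (\<Sum>t\<in>F. sum f (A t))"
      using insert by auto
    finally show ?case using insert by simp
  qed
  finally show ?thesis .
qed

lemma geom_bound:
  fixes K :: "int set" and r :: int
  assumes "finite K" "\<forall>k\<in>K. k > r"
  shows "(\<Sum>k\<in>K. (2::real) powr (1 - real_of_int k)) \<le> 2 powr (1 - real_of_int r)"
proof -
  define h where "h k = nat (k - r - 1)" for k
  define g where "g j = (2::real) powr (1 - real_of_int (r + 1 + int j))" for j
  have inj: "inj_on h K" using assms(2) unfolding h_def inj_on_def by (smt (verit) eq_nat_nat_iff)
  have "(\<Sum>k\<in>K. (2::real) powr (1 - real_of_int k)) = sum (g \<circ> h) K"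
    using assms(2) by (intro sum.cong) (auto simp: g_def h_def)
  also have "\<dots> = sum g (h ` K)" using sum.reindex[OF inj, of g] by simp
  also have "g = (\<lambda>j. 2 powr (- real_of_int r) * (1/2)^j)"
    by (auto simp: g_def fun_eq_iff powr_diff powr_add powr_realpow[symmetric] power_divide powr_minus_divide)
  also have "sum (\<lambda>j. 2 powr (- real_of_int r) * (1/2)^j) (h ` K) = 2 powr (- real_of_int r) * sum (\<lambda>j. (1/2::real)^j) (h`K)"
    by (simp add: sum_distrib_left)
  also have "\<dots> \<le> 2 powr (- real_of_int r) * 2"
  proof (rule mult_left_mono)
    have "sum (\<lambda>j. (1/2::real)^j) (h`K) \<le> suminf (\<lambda>j. (1/2::real)^j)"
      using assms(1) by (intro sum_le_suminf) auto
    also have "suminf (\<lambda>j. (1/2::real)^j) = 2" using suminf_geometric[of "1/2::real"] by simp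
    finally show "sum (\<lambda>j. (1/2::real)^j) (h`K) \<le> 2" .
  qed simp
  also have "2 powr (- real_of_int r) * 2 = 2 powr (1 - real_of_int r)"
    by (simp add: powr_diff powr_minus_divide)
  finally show ?thesis .
qed

lemma eff_Suc: "snd (cover_state b es Ts (Suc t)) v =
  (if v \<in> Ts!t then Some (lev b es t (Ts!t)) else snd (cover_state b es Ts t) v)"
  by (cases "cover_state b es Ts t") (simp add: Let_def)

lemma eid_Suc: "fst (cover_state b es Ts (Suc t)) v =
  (if v \<in> Ts!t then Some t else fst (cover_state b es Ts t) v)"
  by (cases "cover_state b es Ts t") (simp add: Let_def)

declare cover_state.simps(2)[simp del]

lemma eff_mono:
  assumes run: "cover_run b es Ts" and "t \<le> t'" "t' \<le> length es"
    and "snd (cover_state b es Ts t) v = Some k"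
  shows "\<exists>k'. snd (cover_state b es Ts t') v = Some k' \<and> k \<le> k'"
  using assms(2,3)
proof (induction t' rule: dec_induct)
  case base then show ?case using assms(4) by simp
next
  case (step m)
  then obtain k' where k': "snd (cover_state b es Ts m) v = Some k'" "k \<le> k'" by auto
  show ?case
  proof (cases "v \<in> Ts!m")
    case True
    have "effective b es Ts m (Ts!m)" using run step(2,4) unfolding cover_run_def by auto
    then have "lev b es m (Ts!m) > k'" using True k' unfolding effective_def by fastforce
    then show ?thesis using True k' by (simp add: eff_Suc)
  next
    case False then show ?thesis using k' by (simp add: eff_Suc)
  qed
qed

lemma eid_inv:
  assumes "fst (cover_state b es Ts t') v = Some t"
  shows "t < t' \<and> v \<in> Ts!t \<and> snd (cover_state b es Ts t') v = Some (lev b es t (Ts!t))"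
  using assms
proof (induction t')
  case 0 then show ?case by simp
next
  case (Suc m)
  then show ?case by (auto simp: eid_Suc eff_Suc split: if_splits)
qed

lemma lev_strict:
  assumes run: "cover_run b es Ts" and "t1 < t2" "t2 < length es" "v \<in> Ts!t1" "v \<in> Ts!t2"
  shows "lev b es t1 (Ts!t1) < lev b es t2 (Ts!t2)"
proof -
  have "snd (cover_state b es Ts (Suc t1)) v = Some (lev b es t1 (Ts!t1))"
    using assms(4) by (simp add: eff_Suc)
  then obtain k' where k': "snd (cover_state b es Ts t2) v = Some k'" "lev b es t1 (Ts!t1) \<le> k'"
    using eff_mono[OF run, of "Suc t1" t2] assms by fastforce
  have "effective b es Ts t2 (Ts!t2)" using run assms(3) unfolding cover_run_def by auto
  then have "lev b es t2 (Ts!t2) > k'" using assms(5) k' unfolding effective_def by fastforce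
  then show ?thesis using k' by simp
qed

lemma lev_mono:
  assumes "sum b A \<le> sum b A'" "0 < sum b A" "0 < snd (es!t)"
  shows "lev b es t A \<le> lev b es t A'"
proof -
  have "real_of_rat (sum b A / snd (es!t)) \<le> real_of_rat (sum b A' / snd (es!t))"
    using assms by (simp add: of_rat_less_eq divide_right_mono)
  moreover have "0 < real_of_rat (sum b A / snd (es!t))" using assms by simp
  moreover have "0 < sum b A' / snd (es!t)" using assms by simp
  ultimately show ?thesis unfolding lev_def by (intro ceiling_mono log_le_cancel_iff[THEN iffD2]) auto
qed

lemma lev_gt:
  assumes "real_of_rat (sum b A / snd (es!t)) > 2 powr real_of_int r"
  shows "lev b es t A > r"
proof -
  have pos: "0 < real_of_rat (sum b A / snd (es!t))"
    using assms by (smt (verit) powr_gt_zero)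
  have "real_of_int r < log 2 (real_of_rat (sum b A / snd (es!t)))"
    using assms pos by (subst less_log_iff) auto
  then show ?thesis unfolding lev_def by (simp add: less_ceiling_iff)
qed

lemma lev_lower:
  assumes "0 < real_of_rat (sum b A / snd (es!t))"
  shows "real_of_rat (sum b A / snd (es!t)) > 2 powr (real_of_int (lev b es t A) - 1)"
proof -
  let ?x = "real_of_rat (sum b A / snd (es!t))"
  have "real_of_int (lev b es t A) - 1 < log 2 ?x"
    unfolding lev_def using ceiling_correct[of "log 2 ?x"] by linarith
  then show ?thesis using assms by (subst (asm) less_log_iff) auto
qed

lemma A_bound:
  fixes r :: int
  assumes wh: "weighted_hypergraph V b es" and run: "cover_run b es Ts" and t: "t < length es"
  defines "A \<equiv> {v \<in> fst (es!t). case final_eff b es Ts v of None \<Rightarrow> True | Some k \<Rightarrow> k \<le> r}"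
  shows "real_of_rat (sum b A) \<le> 2 powr real_of_int r * real_of_rat (snd (es!t))"
proof (rule ccontr)
  assume neg: "\<not> ?thesis"
  define T where "T = Ts!t"
  define c where "c = snd (es!t)"
  have EV: "fst (es!t) \<subseteq> V" and cpos: "0 < c" using wh t unfolding weighted_hypergraph_def c_def by auto
  have finV: "finite V" and bpos: "\<forall>v\<in>V. 0 < b v" using wh unfolding weighted_hypergraph_def by auto
  have TE: "T \<subseteq> fst (es!t)" and Teff: "effective b es Ts t T"
    and Tmax: "\<And>T'. T' \<subseteq> fst (es!t) \<Longrightarrow> effective b es Ts t T' \<Longrightarrow> sum b T' \<le> sum b T"
    using run t unfolding cover_run_def T_def by auto
  have AE: "A \<subseteq> fst (es!t)" unfolding A_def by auto
  have finA: "finite A" using AE EV finV by (meson finite_subset)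
  have finT: "finite T" using TE EV finV by (meson finite_subset)
  have nnT: "0 \<le> sum b T" using TE EV bpos by (intro sum_nonneg) (meson less_imp_le subsetD)
  have hA: "case snd (cover_state b es Ts t) v of None \<Rightarrow> True | Some k \<Rightarrow> k \<le> r" if "v \<in> A" for v
  proof (cases "snd (cover_state b es Ts t) v")
    case (Some k)
    then obtain k' where "final_eff b es Ts v = Some k'" "k \<le> k'"
      using eff_mono[OF run, of t "length es" v k] t unfolding final_eff_def by auto
    then show ?thesis using that Some unfolding A_def by auto
  qed simp
  have gt: "real_of_rat (sum b A / c) > 2 powr real_of_int r"
    using neg cpos by (simp add: of_rat_divide pos_less_divide_eq c_def)
  have levA: "lev b es t A > r" using lev_gt[of r b A es t] gt c_def by simp
  have Apos: "0 < sum b A"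
  proof -
    have "0 < real_of_rat (sum b A / c)" using gt by (smt (verit) powr_gt_zero)
    then show ?thesis using cpos by (simp add: zero_less_divide_iff)
  qed
  have Aeff: "effective b es Ts t A"
    unfolding effective_def
  proof
    fix v assume "v \<in> A"
    then show "case snd (cover_state b es Ts t) v of None \<Rightarrow> True | Some k \<Rightarrow> k < lev b es t A"
      using hA[of v] levA by (auto split: option.splits)
  qed
  have AT: "sum b A \<le> sum b T" using Tmax[OF AE Aeff] .
  have levT: "lev b es t A \<le> lev b es t T" using lev_mono[OF AT Apos] cpos c_def by simp
  have disj: "A \<inter> T = {}"
  proof (rule ccontr)
    assume "A \<inter> T \<noteq> {}"
    then obtain v where v: "v \<in> A" "v \<in> T" by auto
    have "snd (cover_state b es Ts (Suc t)) v = Some (lev b es t T)" using v(2) T_def by (simp add: eff_Suc)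
    then obtain k' where "final_eff b es Ts v = Some k'" "lev b es t T \<le> k'"
      using eff_mono[OF run, of "Suc t" "length es" v] t unfolding final_eff_def by auto
    then show False using v(1) levA levT unfolding A_def by auto
  qed
  have sumU: "sum b (A \<union> T) = sum b A + sum b T" using disj finA finT by (simp add: sum.union_disjoint)
  have l1: "lev b es t A \<le> lev b es t (A \<union> T)" using lev_mono[of b A "A \<union> T" es t] sumU nnT Apos cpos c_def by simp
  have l2: "lev b es t T \<le> lev b es t (A \<union> T)" using lev_mono[of b T "A \<union> T" es t] sumU Apos AT cpos c_def by simp
  have Ueff: "effective b es Ts t (A \<union> T)"
    unfolding effective_def
  proof
    fix v assume "v \<in> A \<union> T"
    then show "case snd (cover_state b es Ts t) v of None \<Rightarrow> True | Some k \<Rightarrow> k < lev b es t (A \<union> T)"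
    proof
      assume "v \<in> A"
      then show ?thesis using hA[of v] levA l1 by (auto split: option.splits)
    next
      assume "v \<in> T"
      then show ?thesis using Teff l2 unfolding effective_def by (fastforce split: option.splits)
    qed
  qed
  have "sum b (A \<union> T) \<le> sum b T" using Tmax[OF _ Ueff] AE TE by auto
  then show False using sumU Apos by simp
qed

lemma S_bound:
  assumes wh: "weighted_hypergraph V b es" and run: "cover_run b es Ts"
  shows "real_of_rat (edge_cost es (S_gt V b es Ts r)) \<le> 2 powr (1 - real_of_int r) * real_of_rat (sum b V)"
proof -
  define S where "S = S_gt V b es Ts r"
  define L where "L t = lev b es t (Ts!t)" for t
  define \<beta> where "\<beta> v = real_of_rat (b v)" for v
  define C where "C t = real_of_rat (snd (es!t))" for t
  have finV: "finite V" and bpos: "\<forall>v\<in>V. 0 < b v" using wh unfolding weighted_hypergraph_def by auto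
  have finS: "finite S" unfolding S_def S_gt_def by auto
  have TV: "Ts!t \<subseteq> V" if "t < length es" for t
    using run wh that unfolding cover_run_def weighted_hypergraph_def by blast
  have Sprop: "t < length es \<and> (\<exists>v\<in>V. v \<in> Ts!t) \<and> L t > r" if tS: "t \<in> S" for t
  proof -
    obtain v k where v: "v \<in> V" "final_eff b es Ts v = Some k" "k > r" "final_eid b es Ts v = Some t" "t < length es"
    proof -
      from tS obtain v where v: "v \<in> V" "case final_eff b es Ts v of None \<Rightarrow> False | Some k \<Rightarrow> k > r"
        "final_eid b es Ts v = Some t" "t < length es" unfolding S_def S_gt_def by auto
      then obtain k where "final_eff b es Ts v = Some k" "k > r" by (auto split: option.splits)
      then show ?thesis using v that by blast
    qed
    then have "v \<in> Ts!t" "k = L t" using eid_inv[of b es Ts "length es" v t]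
      unfolding final_eid_def final_eff_def L_def by auto
    then show ?thesis using v by auto
  qed
  have Cb: "C t \<le> 2 powr (1 - real_of_int (L t)) * (\<Sum>v\<in>Ts!t. \<beta> v)" if "t \<in> S" for t
  proof -
    from Sprop[OF that] obtain v where tl: "t < length es" and v: "v \<in> V" "v \<in> Ts!t" by auto
    have cpos: "0 < snd (es!t)" using wh tl unfolding weighted_hypergraph_def by auto
    have finT: "finite (Ts!t)" using TV[OF tl] finV by (meson finite_subset)
    have "0 < sum b (Ts!t)"
      using finT v bpos TV[OF tl] by (intro sum_pos2[of _ v]) (auto intro: less_imp_le)
    then have pos: "0 < real_of_rat (sum b (Ts!t) / snd (es!t))" using cpos by simp
    have "real_of_rat (sum b (Ts!t) / snd (es!t)) > 2 powr (real_of_int (L t) - 1)"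
      using lev_lower[OF pos] unfolding L_def .
    then have "real_of_rat (sum b (Ts!t)) / C t > 2 powr (real_of_int (L t) - 1)"
      by (simp add: of_rat_divide C_def)
    then have "2 powr (real_of_int (L t) - 1) * C t < real_of_rat (sum b (Ts!t))"
      using cpos by (simp add: C_def pos_less_divide_eq)
    then have "C t < real_of_rat (sum b (Ts!t)) / 2 powr (real_of_int (L t) - 1)"
      by (simp add: pos_less_divide_eq mult.commute)
    also have "\<dots> = 2 powr (1 - real_of_int (L t)) * real_of_rat (sum b (Ts!t))"
      by (simp add: powr_diff)
    finally show ?thesis by (simp add: of_rat_sum \<beta>_def)
  qed
  have "real_of_rat (edge_cost es S) = (\<Sum>t\<in>S. C t)" unfolding edge_cost_def C_def by (simp add: of_rat_sum)
  also have "\<dots> \<le> (\<Sum>t\<in>S. 2 powr (1 - real_of_int (L t)) * (\<Sum>v\<in>Ts!t. \<beta> v))"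
    using Cb by (intro sum_mono) auto
  also have "\<dots> = (\<Sum>t\<in>S. \<Sum>v\<in>V. if v \<in> Ts!t then 2 powr (1 - real_of_int (L t)) * \<beta> v else 0)"
  proof (intro sum.cong refl)
    fix t assume "t \<in> S"
    then have "Ts!t \<subseteq> V" using Sprop TV by blast
    then have "Ts!t = {v\<in>V. v \<in> Ts!t}" by auto
    then have "(\<Sum>v\<in>Ts!t. \<beta> v) = (\<Sum>v\<in>{v\<in>V. v \<in> Ts!t}. \<beta> v)" by simp
    also have "\<dots> = (\<Sum>v\<in>V. if v \<in> Ts!t then \<beta> v else 0)" using finV by (simp add: sum.inter_filter)
    finally show "2 powr (1 - real_of_int (L t)) * (\<Sum>v\<in>Ts!t. \<beta> v) = (\<Sum>v\<in>V. if v \<in> Ts!t then 2 powr (1 - real_of_int (L t)) * \<beta> v else 0)"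
      by (auto simp: sum_distrib_left intro!: sum.cong)
  qed
  also have "\<dots> = (\<Sum>v\<in>V. \<Sum>t\<in>S. if v \<in> Ts!t then 2 powr (1 - real_of_int (L t)) * \<beta> v else 0)"
    by (rule sum.swap)
  also have "\<dots> = (\<Sum>v\<in>V. \<beta> v * (\<Sum>t\<in>{t\<in>S. v \<in> Ts!t}. 2 powr (1 - real_of_int (L t))))"
  proof (intro sum.cong refl)
    fix v
    have "(\<Sum>t\<in>S. if v \<in> Ts!t then 2 powr (1 - real_of_int (L t)) * \<beta> v else 0)
      = (\<Sum>t\<in>{t\<in>S. v \<in> Ts!t}. 2 powr (1 - real_of_int (L t)) * \<beta> v)"
      using finS by (simp add: sum.inter_filter)
    then show "(\<Sum>t\<in>S. if v \<in> Ts!t then 2 powr (1 - real_of_int (L t)) * \<beta> v else 0)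
      = \<beta> v * (\<Sum>t\<in>{t\<in>S. v \<in> Ts!t}. 2 powr (1 - real_of_int (L t)))"
      by (simp add: sum_distrib_left mult.commute)
  qed
  also have "\<dots> \<le> (\<Sum>v\<in>V. \<beta> v * 2 powr (1 - real_of_int r))"
  proof (intro sum_mono mult_left_mono)
    fix v assume "v \<in> V"
    then show "0 \<le> \<beta> v" using bpos \<beta>_def by (simp add: less_imp_le)
    define X where "X = {t\<in>S. v \<in> Ts!t}"
    have inj: "inj_on L X"
    proof (rule inj_onI)
      fix t1 t2 assume h: "t1 \<in> X" "t2 \<in> X" "L t1 = L t2"
      show "t1 = t2"
      proof (rule ccontr)
        assume "t1 \<noteq> t2"
        then consider "t1 < t2" | "t2 < t1" by linarith
        then show False
        proof cases
          case 1 then show False using lev_strict[OF run 1, of v] h Sprop unfolding X_def L_def by auto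
        next
          case 2 then show False using lev_strict[OF run 2, of v] h Sprop unfolding X_def L_def by auto
        qed
      qed
    qed
    have "(\<Sum>t\<in>X. 2 powr (1 - real_of_int (L t))) = (\<Sum>k\<in>L`X. 2 powr (1 - real_of_int k))"
      using sum.reindex[OF inj, of "\<lambda>k. 2 powr (1 - real_of_int k)"] by simp
    also have "\<dots> \<le> 2 powr (1 - real_of_int r)"
      using finS Sprop unfolding X_def by (intro geom_bound) auto
    finally show "(\<Sum>t\<in>{t\<in>S. v \<in> Ts!t}. 2 powr (1 - real_of_int (L t))) \<le> 2 powr (1 - real_of_int r)"
      unfolding X_def .
  qed
  also have "\<dots> = 2 powr (1 - real_of_int r) * real_of_rat (sum b V)"
    by (simp add: \<beta>_def of_rat_sum sum_distrib_right mult.commute)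
  finally show ?thesis unfolding S_def .
qed

theorem lemma11:
  fixes V :: "'v set" and b :: "'v \<Rightarrow> rat" and es :: "'v stream"
    and Ts :: "'v set list" and OPT :: "nat set" and \<epsilon> :: real and rstar :: int
  assumes "weighted_hypergraph V b es"
    and "\<forall>v\<in>V. \<exists>i<length es. v \<in> fst (es!i)"
    and "min_edge_cover V es OPT"
    and "cover_run b es Ts"
    and "0 < \<epsilon>" and "\<epsilon> < 1"
    and "real_of_rat (sum b (I_le V b es Ts rstar)) \<le> \<epsilon> * real_of_rat (sum b V)"
    and "\<forall>r. real_of_rat (sum b (I_le V b es Ts r)) \<le> \<epsilon> * real_of_rat (sum b V) \<longrightarrow> r \<le> rstar"
  shows "real_of_rat (edge_cost es (S_gt V b es Ts rstar)) < 8 * real_of_rat (edge_cost es OPT) / \<epsilon>"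
proof -
  note wh = assms(1) and run = assms(4)
  define r where "r = rstar + 1"
  define A where "A t = {v \<in> fst (es!t). case final_eff b es Ts v of None \<Rightarrow> True | Some k \<Rightarrow> k \<le> r}" for t
  have finV: "finite V" and bpos: "\<forall>v\<in>V. 0 < b v" using wh unfolding weighted_hypergraph_def by auto
  have cov: "OPT \<subseteq> {..<length es}" "(\<Union>i\<in>OPT. fst (es!i)) = V"
    using assms(3) unfolding min_edge_cover_def edge_cover_def by auto
  have finO: "finite OPT" using cov(1) by (meson finite_lessThan finite_subset)
  have EV: "fst (es!t) \<subseteq> V" if "t \<in> OPT" for t using cov(2) that by blast
  have I1: "\<epsilon> * real_of_rat (sum b V) < real_of_rat (sum b (I_le V b es Ts r))"
    using assms(8)[rule_format, of "rstar + 1"] unfolding r_def by linarith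
  have "real_of_rat (sum b (I_le V b es Ts r)) = (\<Sum>v\<in>I_le V b es Ts r. real_of_rat (b v))"
    by (simp add: of_rat_sum)
  also have "\<dots> \<le> (\<Sum>t\<in>OPT. (\<Sum>v\<in>A t. real_of_rat (b v)))"
  proof (rule sum_le_UN)
    show "finite OPT" by (rule finO)
    show "\<forall>t\<in>OPT. finite (A t)"
    proof
      fix t assume "t \<in> OPT"
      then have "A t \<subseteq> V" using EV unfolding A_def by auto
      then show "finite (A t)" using finV by (rule finite_subset)
    qed
    show "\<forall>x\<in>\<Union>(A`OPT). 0 \<le> real_of_rat (b x)"
    proof
      fix x assume "x \<in> \<Union>(A`OPT)"
      then have "x \<in> V" using EV unfolding A_def by auto
      then show "0 \<le> real_of_rat (b x)" using bpos by (simp add: less_imp_le)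
    qed
    show "I_le V b es Ts r \<subseteq> \<Union>(A`OPT)"
    proof
      fix v assume v: "v \<in> I_le V b es Ts r"
      then have "v \<in> V" unfolding I_le_def by auto
      then obtain t where "t \<in> OPT" "v \<in> fst (es!t)" using cov(2) by blast
      then show "v \<in> \<Union>(A`OPT)" using v unfolding A_def I_le_def by auto
    qed
  qed
  also have "\<dots> \<le> (\<Sum>t\<in>OPT. 2 powr real_of_int r * real_of_rat (snd (es!t)))"
  proof (rule sum_mono)
    fix t assume "t \<in> OPT"
    then have "t < length es" using cov(1) by auto
    from A_bound[OF wh run this, of r] show "(\<Sum>v\<in>A t. real_of_rat (b v)) \<le> 2 powr real_of_int r * real_of_rat (snd (es!t))"
      unfolding A_def by (simp add: of_rat_sum)
  qed
  also have "\<dots> = 2 powr real_of_int r * real_of_rat (edge_cost es OPT)"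
    by (simp add: edge_cost_def of_rat_sum sum_distrib_left)
  finally have I2: "\<epsilon> * real_of_rat (sum b V) < 2 powr real_of_int r * real_of_rat (edge_cost es OPT)"
    using I1 by linarith
  define P where "P = (2::real) powr real_of_int rstar"
  have Ppos: "P > 0" unfolding P_def by simp
  have P1: "2 powr real_of_int r = 2 * P" unfolding P_def r_def by (simp add: powr_add)
  have P2: "2 powr (1 - real_of_int rstar) = 2 / P" unfolding P_def by (simp add: powr_diff)
  have BV: "0 \<le> real_of_rat (sum b V)" using bpos by (simp add: sum_nonneg less_imp_le)
  have CO: "0 < real_of_rat (edge_cost es OPT)"
  proof -
    have "0 \<le> \<epsilon> * real_of_rat (sum b V)" using BV assms(5) by simp
    then have "0 < 2 * P * real_of_rat (edge_cost es OPT)" using I2 unfolding P1 by linarith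
    then show ?thesis using Ppos by (simp add: zero_less_mult_iff)
  qed
  have "real_of_rat (edge_cost es (S_gt V b es Ts rstar)) \<le> 2 / P * real_of_rat (sum b V)"
    using S_bound[OF wh run, of rstar] P2 by simp
  also have "\<dots> < 2 / P * (2 * P * real_of_rat (edge_cost es OPT) / \<epsilon>)"
  proof (rule mult_strict_left_mono)
    show "real_of_rat (sum b V) < 2 * P * real_of_rat (edge_cost es OPT) / \<epsilon>"
      using I2 P1 assms(5) by (simp add: pos_less_divide_eq mult.commute)
  qed (use Ppos in simp)
  also have "\<dots> = 4 * real_of_rat (edge_cost es OPT) / \<epsilon>" using Ppos by (simp add: field_simps)
  also have "\<dots> \<le> 8 * real_of_rat (edge_cost es OPT) / \<epsilon>"
    using CO assms(5) by (simp add: divide_right_mono)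
  finally show ?thesis .
qed

end
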